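(* Let $n,m\ge1$, $r>0$, let $\varphi_1,\dots,\varphi_n:\mathbb{R}\to[0,\infty)$ be nonnegative functions and $x_1,\dots,x_m\in\mathbb{R}$ such that for each $j$ there is $i$ with $\varphi_i(x_j)>0$. Set $v^1_i=\sqrt{r/n}$ for $i=1,\dots,n$. For $k\ge1$, given $v^k\in[0,\infty)^n$, let $u^k\in[0,\infty)^n$ with $\sum_i(u^k_i)^2=r$ be a point at which $\widehat l^{\,k}(u)=\prod_{j=1}^m\big(\sum_{i=1}^n u_iv^k_i\varphi_i(x_j)\big)$ attains its maximum over the sphere $\{u\in\mathbb{R}^n:\sum_iu_i^2=r\}$; let $\overline\theta^{k+1}>0$ satisfy $(\overline\theta^{k+1})^2\sum_i u^k_iv^k_i=r$ and set $v^{k+1}_i=\overline\theta^{k+1}\sqrt{u^k_iv^k_i}$. Let $w^k_i=|u^k_i-v^k_i|$. Then $\lim_{k\to\infty}w^k_i=0$ for every $i=1,\dots,n$. *)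

theory Defs
  imports Complex_Main
begin

definition lhat :: "nat \<Rightarrow> nat \<Rightarrow> (nat \<Rightarrow> real \<Rightarrow> real) \<Rightarrow> (nat \<Rightarrow> real)
    \<Rightarrow> (nat \<Rightarrow> real) \<Rightarrow> (nat \<Rightarrow> real) \<Rightarrow> real" where
  "lhat n m \<phi> x v u = (\<Prod>j=1..m. \<Sum>i=1..n. u i * v i * \<phi> i (x j))"

end

theory Submission
  imports Defs
begin

theorem lemma8:
  fixes n m :: nat and r :: real
    and \<phi> :: "nat \<Rightarrow> real \<Rightarrow> real" and x :: "nat \<Rightarrow> real"
    and u v :: "nat \<Rightarrow> nat \<Rightarrow> real" and \<theta> :: "nat \<Rightarrow> real"
  assumes "n \<ge> 1" and "m \<ge> 1" and "r > 0"
    and phi_nonneg: "\<And>i t. i \<in> {1..n} \<Longrightarrow> \<phi> i t \<ge> 0"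
    and pos: "\<And>j. j \<in> {1..m} \<Longrightarrow> \<exists>i\<in>{1..n}. \<phi> i (x j) > 0"
    and v1: "\<And>i. i \<in> {1..n} \<Longrightarrow> v 1 i = sqrt (r / real n)"
    and u_nonneg: "\<And>k i. k \<ge> 1 \<Longrightarrow> i \<in> {1..n} \<Longrightarrow> u k i \<ge> 0"
    and u_sphere: "\<And>k. k \<ge> 1 \<Longrightarrow> (\<Sum>i=1..n. (u k i)\<^sup>2) = r"
    and u_max: "\<And>k w. k \<ge> 1 \<Longrightarrow> (\<Sum>i=1..n. (w i)\<^sup>2) = r \<Longrightarrow>
                  lhat n m \<phi> x (v k) w \<le> lhat n m \<phi> x (v k) (u k)"
    and theta_pos: "\<And>k. k \<ge> 1 \<Longrightarrow> \<theta> (k + 1) > 0"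
    and theta_eq: "\<And>k. k \<ge> 1 \<Longrightarrow> (\<theta> (k + 1))\<^sup>2 * (\<Sum>i=1..n. u k i * v k i) = r"
    and v_next: "\<And>k i. k \<ge> 1 \<Longrightarrow> i \<in> {1..n} \<Longrightarrow>
                  v (k + 1) i = \<theta> (k + 1) * sqrt (u k i * v k i)"
  shows "\<forall>i\<in>{1..n}. (\<lambda>k. \<bar>u k i - v k i\<bar>) \<longlonglongrightarrow> 0"
proof -
  have vA: "(\<Sum>i=1..n. (v (Suc k) i)\<^sup>2) = r \<and> (\<forall>i\<in>{1..n}. v (Suc k) i \<ge> 0)" for k
  proof (induction k)
    case 0
    have "(\<Sum>i=1..n. (v 1 i)\<^sup>2) = (\<Sum>i=1..n. r / real n)"
      by (rule sum.cong) (use v1 \<open>r > 0\<close> in auto)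
    also have "\<dots> = r" using \<open>n \<ge> 1\<close> by simp
    finally show ?case using v1 \<open>r > 0\<close> by simp
  next
    case (Suc k)
    have sq: "(v (Suc (Suc k)) i)\<^sup>2 = (\<theta> (Suc (Suc k)))\<^sup>2 * (u (Suc k) i * v (Suc k) i)"
      if "i \<in> {1..n}" for i
    proof -
      have "0 \<le> u (Suc k) i * v (Suc k) i" using u_nonneg[of "Suc k" i] Suc that by simp
      then show ?thesis using v_next[of "Suc k" i] that by (simp add: power_mult_distrib)
    qed
    have "(\<Sum>i=1..n. (v (Suc (Suc k)) i)\<^sup>2) = (\<Sum>i=1..n. (\<theta> (Suc (Suc k)))\<^sup>2 * (u (Suc k) i * v (Suc k) i))"
      by (rule sum.cong) (use sq in auto)
    also have "\<dots> = r" using theta_eq[of "Suc k"] by (simp add: sum_distrib_left)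
    finally show ?case using v_next[of "Suc k"] theta_pos[of "Suc k"] u_nonneg[of "Suc k"] Suc
      by auto
  qed
  define S where "S k = (\<Sum>i=1..n. u k i * v k i)" for k
  define D where "D k = (\<Sum>i=1..n. (u k i - v k i)\<^sup>2)" for k
  have DS: "D (Suc k) = 2 * r - 2 * S (Suc k)" for k
  proof -
    have "D (Suc k) = (\<Sum>i=1..n. (u (Suc k) i)\<^sup>2) + (\<Sum>i=1..n. (v (Suc k) i)\<^sup>2) - 2 * S (Suc k)"
      unfolding D_def S_def by (simp add: power2_diff sum.distrib sum_subtractf sum_distrib_left mult.assoc)
    then show ?thesis using vA[of k] u_sphere[of "Suc k"] by simp
  qed
  have D0: "D k \<ge> 0" for k unfolding D_def by (auto intro: sum_nonneg)
  have Spos: "S (Suc k) > 0" for k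
  proof -
    have "S (Suc k) \<ge> 0" unfolding S_def using vA[of k] u_nonneg[of "Suc k"]
      by (auto intro!: sum_nonneg)
    moreover have "S (Suc k) \<noteq> 0" using theta_eq[of "Suc k"] \<open>r > 0\<close> unfolding S_def by auto
    ultimately show ?thesis by simp
  qed
  have Sle: "S (Suc k) \<le> r" for k using DS[of k] D0[of "Suc k"] by simp
  define q where "q k = (\<theta> (Suc (Suc k)))\<^sup>2" for k
  have qS: "q k * S (Suc k) = r" for k using theta_eq[of "Suc k"] unfolding q_def S_def by simp
  have q1: "q k \<ge> 1" for k
  proof -
    have "q k * S (Suc k) \<ge> 1 * S (Suc k)" using qS[of k] Sle[of k] by simp
    then show ?thesis using Spos[of k] by (simp add: mult_le_cancel_right)
  qed
  define l where "l k = lhat n m \<phi> x (v k) (v k)" for k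
  define lu where "lu k = lhat n m \<phi> x (v k) (u k)" for k
  have l_le_lu: "l (Suc k) \<le> lu (Suc k)" for k
    unfolding l_def lu_def using u_max[of "Suc k" "v (Suc k)"] vA[of k] by simp
  have lu0: "lu (Suc k) \<ge> 0" for k
    unfolding lu_def lhat_def using vA[of k] u_nonneg[of "Suc k"] phi_nonneg
    by (auto intro!: prod_nonneg sum_nonneg)
  have l_step: "l (Suc (Suc k)) = q k ^ m * lu (Suc k)" for k
  proof -
    have f: "(\<Sum>i=1..n. v (Suc (Suc k)) i * v (Suc (Suc k)) i * \<phi> i (x j))
        = q k * (\<Sum>i=1..n. u (Suc k) i * v (Suc k) i * \<phi> i (x j))" for j
    proof -
      have "(\<Sum>i=1..n. v (Suc (Suc k)) i * v (Suc (Suc k)) i * \<phi> i (x j))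
        = (\<Sum>i=1..n. q k * (u (Suc k) i * v (Suc k) i * \<phi> i (x j)))"
      proof (rule sum.cong)
        fix i assume i: "i \<in> {1..n}"
        have "0 \<le> u (Suc k) i * v (Suc k) i" using u_nonneg[of "Suc k" i] vA[of k] i by simp
        then have "v (Suc (Suc k)) i * v (Suc (Suc k)) i = q k * (u (Suc k) i * v (Suc k) i)"
          using v_next[of "Suc k" i] i unfolding q_def
          by (simp add: power2_eq_square algebra_simps)
        then show "v (Suc (Suc k)) i * v (Suc (Suc k)) i * \<phi> i (x j) = q k * (u (Suc k) i * v (Suc k) i * \<phi> i (x j))"
          by simp
      qed simp
      then show ?thesis by (simp add: sum_distrib_left)
    qed
    show ?thesis unfolding l_def lu_def lhat_def
      by (simp only: f prod.distrib) simp
  qed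
  define B where "B = (\<Prod>j=1..m. r * (\<Sum>i=1..n. \<phi> i (x j)))"
  have lB: "l (Suc k) \<le> B" for k
    unfolding l_def lhat_def B_def
  proof (rule prod_mono)
    fix j assume j: "j \<in> {1..m}"
    show "0 \<le> (\<Sum>i=1..n. v (Suc k) i * v (Suc k) i * \<phi> i (x j)) \<and>
          (\<Sum>i=1..n. v (Suc k) i * v (Suc k) i * \<phi> i (x j)) \<le> r * (\<Sum>i=1..n. \<phi> i (x j))"
    proof
      show "0 \<le> (\<Sum>i=1..n. v (Suc k) i * v (Suc k) i * \<phi> i (x j))"
        using phi_nonneg by (auto intro!: sum_nonneg)
      have "(\<Sum>i=1..n. v (Suc k) i * v (Suc k) i * \<phi> i (x j))
          \<le> (\<Sum>i=1..n. (v (Suc k) i)\<^sup>2 * (\<Sum>i=1..n. \<phi> i (x j)))"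
      proof (rule sum_mono)
        fix i assume i: "i \<in> {1..n}"
        have "\<phi> i (x j) \<le> (\<Sum>i=1..n. \<phi> i (x j))"
          by (rule member_le_sum) (use i phi_nonneg in auto)
        then show "v (Suc k) i * v (Suc k) i * \<phi> i (x j) \<le> (v (Suc k) i)\<^sup>2 * (\<Sum>i=1..n. \<phi> i (x j))"
          by (simp add: power2_eq_square mult_left_mono)
      qed
      also have "\<dots> = r * (\<Sum>i=1..n. \<phi> i (x j))" using vA[of k] by (simp add: sum_distrib_right[symmetric])
      finally show "(\<Sum>i=1..n. v (Suc k) i * v (Suc k) i * \<phi> i (x j)) \<le> r * (\<Sum>i=1..n. \<phi> i (x j))" .
    qed
  qed
  have l1: "l 1 > 0"
    unfolding l_def lhat_def
  proof (rule prod_pos)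
    fix j assume j: "j \<in> {1..m}"
    obtain i0 where i0: "i0 \<in> {1..n}" "\<phi> i0 (x j) > 0" using pos[OF j] by blast
    have vv: "v 1 i * v 1 i = r / real n" if "i \<in> {1..n}" for i
      using v1[OF that] \<open>r > 0\<close> by simp
    have "0 < v 1 i0 * v 1 i0 * \<phi> i0 (x j)" using vv[OF i0(1)] i0(2) \<open>r>0\<close> \<open>n\<ge>1\<close> by simp
    also have "\<dots> \<le> (\<Sum>i=1..n. v 1 i * v 1 i * \<phi> i (x j))"
      by (rule member_le_sum) (use i0 vv phi_nonneg \<open>r>0\<close> in auto)
    finally show "0 < (\<Sum>i=1..n. v 1 i * v 1 i * \<phi> i (x j))" .
  qed
  define a where "a k = l (Suc k)" for k
  have qm1: "q k ^ m \<ge> 1" for k using q1[of k] by simp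
  have a_step: "a (Suc k) \<ge> q k ^ m * a k" for k
    unfolding a_def using l_step[of k] l_le_lu[of k] qm1[of k] by (simp add: mult_left_mono)
  have a_mono: "a k \<le> a (Suc k)" for k
  proof -
    have "a k \<le> lu (Suc k)" unfolding a_def using l_le_lu by simp
    also have "\<dots> \<le> q k ^ m * lu (Suc k)" using qm1[of k] lu0[of k] by (simp add: mult_le_cancel_right1)
    finally show ?thesis unfolding a_def using l_step[of k] by simp
  qed
  have inc: "incseq a" using a_mono by (simp add: incseq_SucI)
  have apos: "a k > 0" for k
  proof -
    have "a 0 \<le> a k" using inc by (simp add: incseq_def)
    then show ?thesis using l1 unfolding a_def by simp
  qed
  have "bdd_above (range a)" unfolding a_def by (rule bdd_aboveI[where M=B]) (use lB in auto)
  then obtain L where aL: "a \<longlonglongrightarrow> L" using inc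
    using LIMSEQ_incseq_SUP by blast
  have "L \<ge> a 0" using inc aL by (simp add: incseq_le)
  then have Lpos: "L > 0" using apos[of 0] by simp
  have ratio: "(\<lambda>k. a (Suc k) / a k) \<longlonglongrightarrow> L / L"
    by (rule tendsto_divide) (use aL LIMSEQ_Suc[OF aL] Lpos in auto)
  have tq: "(\<lambda>k. q k ^ m) \<longlonglongrightarrow> 1"
  proof (rule tendsto_sandwich[where f="\<lambda>_. 1" and h="\<lambda>k. a (Suc k) / a k"])
    show "\<forall>\<^sub>F k in sequentially. 1 \<le> q k ^ m" using qm1 by simp
    show "\<forall>\<^sub>F k in sequentially. q k ^ m \<le> a (Suc k) / a k"
      using a_step apos by (simp add: pos_le_divide_eq)
    show "(\<lambda>k. a (Suc k) / a k) \<longlonglongrightarrow> 1" using ratio Lpos by simp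
  qed simp
  have tq2: "q \<longlonglongrightarrow> 1"
  proof (rule tendsto_sandwich[where f="\<lambda>_. 1" and h="\<lambda>k. q k ^ m"])
    show "\<forall>\<^sub>F k in sequentially. 1 \<le> q k" using q1 by simp
    have "q k ^ 1 \<le> q k ^ m" for k by (rule power_increasing) (use q1 \<open>m \<ge> 1\<close> in auto)
    then show "\<forall>\<^sub>F k in sequentially. q k \<le> q k ^ m" by simp
  qed (use tq in auto)
  have "(\<lambda>k. r / q k) \<longlonglongrightarrow> r / 1" by (rule tendsto_divide) (use tq2 in auto)
  moreover have "S (Suc k) = r / q k" for k using qS[of k] q1[of k]
    by (simp add: eq_divide_eq mult.commute)
  ultimately have "(\<lambda>k. S (Suc k)) \<longlonglongrightarrow> r" by simp
  then have "(\<lambda>k. 2 * r - 2 * S (Suc k)) \<longlonglongrightarrow> 2 * r - 2 * r"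
    by (intro tendsto_intros)
  then have Dl: "(\<lambda>k. D (Suc k)) \<longlonglongrightarrow> 0" using DS by simp
  have sqD: "(\<lambda>k. sqrt (D (Suc k))) \<longlonglongrightarrow> 0"
    using tendsto_real_sqrt[OF Dl] by simp
  show ?thesis
  proof
    fix i assume i: "i \<in> {1..n}"
    have "(\<lambda>k. \<bar>u (Suc k) i - v (Suc k) i\<bar>) \<longlonglongrightarrow> 0"
    proof (rule tendsto_sandwich[where f="\<lambda>_. 0" and h="\<lambda>k. sqrt (D (Suc k))"])
      have "\<bar>u (Suc k) i - v (Suc k) i\<bar> \<le> sqrt (D (Suc k))" for k
      proof -
        have "(u (Suc k) i - v (Suc k) i)\<^sup>2 \<le> D (Suc k)"
          unfolding D_def by (rule member_le_sum) (use i in auto)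
        then have "sqrt ((u (Suc k) i - v (Suc k) i)\<^sup>2) \<le> sqrt (D (Suc k))"
          by (rule real_sqrt_le_mono)
        then show ?thesis by simp
      qed
      then show "\<forall>\<^sub>F k in sequentially. \<bar>u (Suc k) i - v (Suc k) i\<bar> \<le> sqrt (D (Suc k))" by simp
    qed (use sqD in auto)
    then show "(\<lambda>k. \<bar>u k i - v k i\<bar>) \<longlonglongrightarrow> 0" by (rule LIMSEQ_imp_Suc)
  qed
qed

end
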